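(* Assume $q<\ell$. For every $Z\in S^{\ell}_{q,p}$, the set $$\mathcal{C}_Z:=\bigcup_{E\in\Lambda^{\ell}_Z}T^{1,0}_Z\,Gr(q,E)$$ is not contained in any proper complex linear subspace of $T^{1,0}_ZS^{\ell}_{q,p}$.
   Context: Let $q<p$ and $q\le\ell\le(p+q)/2$ be positive integers, $m=p+q-\ell$. $Gr(q,p)$ is the Grassmannian of $q$-planes in $\mathbb{C}^{p+q}$; $\langle u,v\rangle_{\ell,m}=-\sum_{i=1}^{\ell}u_i\bar v_i+\sum_{i=\ell+1}^{p+q}u_i\bar v_i$; $S^{\ell}_{q,p}=\{Z\in Gr(q,p):\langle\cdot,\cdot\rangle_{\ell,m}|_Z=0\}$ with the CR structure induced from $Gr(q,p)$. $N(\ell,m)$ is the set of subspaces $F\subset\mathbb{C}^{p+q}$ with $\langle\cdot,\cdot\rangle_{\ell,m}|_F=0$, and for $F\in N(\ell,m)$ and $n\ge\dim F$, $\Lambda^n_F=\{E\in N(\ell,m):\dim E=n,\ F\subset E\}$. For $E\in\Lambda^\ell_Z$, $Gr(q,E)$ (the $q$-planes contained in $E$) is a complex submanifold of $Gr(q,p)$ contained in $S^{\ell}_{q,p}$ and passing through $Z$. *)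

theory Defs
  imports Complex_Main "HOL-Library.Function_Algebras"
begin

text \<open>Model of C^(p+q): functions nat => complex vanishing at indices >= p+q,
  with pointwise addition (Function_Algebras) and complex scalar multiplication vsc.\<close>

type_synonym cvec = "nat \<Rightarrow> complex"

definition vsc :: "complex \<Rightarrow> cvec \<Rightarrow> cvec" where
  "vsc c u = (\<lambda>i. c * u i)"

definition ambient :: "nat \<Rightarrow> cvec set" where
  "ambient n = {u. \<forall>i\<ge>n. u i = 0}"

definition csubspace :: "nat \<Rightarrow> cvec set \<Rightarrow> bool" where
  "csubspace n F \<longleftrightarrow> module.subspace vsc F \<and> F \<subseteq> ambient n"

definition cdim :: "cvec set \<Rightarrow> nat" where
  "cdim F = vector_space.dim vsc F"

definition herm :: "nat \<Rightarrow> nat \<Rightarrow> cvec \<Rightarrow> cvec \<Rightarrow> complex" where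
  "herm n l u v = (\<Sum>i<n. (if i < l then -1 else 1) * u i * cnj (v i))"

definition isotropic :: "nat \<Rightarrow> nat \<Rightarrow> cvec set \<Rightarrow> bool" where
  "isotropic n l F \<longleftrightarrow> (\<forall>u\<in>F. \<forall>v\<in>F. herm n l u v = 0)"

definition Gr :: "nat \<Rightarrow> nat \<Rightarrow> cvec set set" where
  "Gr q p = {Z. csubspace (p+q) Z \<and> cdim Z = q}"

definition Sgr :: "nat \<Rightarrow> nat \<Rightarrow> nat \<Rightarrow> cvec set set" where
  "Sgr l q p = {Z \<in> Gr q p. isotropic (p+q) l Z}"

definition Nset :: "nat \<Rightarrow> nat \<Rightarrow> cvec set set" where
  "Nset n l = {F. csubspace n F \<and> isotropic n l F}"

definition Lambda :: "nat \<Rightarrow> nat \<Rightarrow> nat \<Rightarrow> cvec set \<Rightarrow> cvec set set" where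
  "Lambda n l k F = {E \<in> Nset n l. cdim E = k \<and> F \<subseteq> E}"

text \<open>Complex linear maps from Z into Y, represented as functions vanishing off Z.
  Tangent vectors of Gr(q,p) at Z are elements of Hom(Z, C^n / Z), i.e. the
  classes of hom_into Z (ambient n) modulo hom_into Z Z.\<close>
definition hom_into :: "cvec set \<Rightarrow> cvec set \<Rightarrow> (cvec \<Rightarrow> cvec) set" where
  "hom_into Z Y = {\<phi>. (\<forall>u\<in>Z. \<forall>v\<in>Z. \<phi> (u + v) = \<phi> u + \<phi> v)
                     \<and> (\<forall>c. \<forall>u\<in>Z. \<phi> (vsc c u) = vsc c (\<phi> u))
                     \<and> (\<forall>u\<in>Z. \<phi> u \<in> Y) \<and> (\<forall>u. u \<notin> Z \<longrightarrow> \<phi> u = 0)}"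

definition hsc :: "complex \<Rightarrow> (cvec \<Rightarrow> cvec) \<Rightarrow> (cvec \<Rightarrow> cvec)" where
  "hsc c \<phi> = (\<lambda>u. vsc c (\<phi> u))"

text \<open>(Lift of) the real tangent space T_Z S^l_{q,p}: derivative of the defining
  condition <z,w> = 0 on Z.\<close>
definition TS :: "nat \<Rightarrow> nat \<Rightarrow> cvec set \<Rightarrow> (cvec \<Rightarrow> cvec) set" where
  "TS n l Z = {\<phi> \<in> hom_into Z (ambient n).
      \<forall>z\<in>Z. \<forall>w\<in>Z. herm n l (\<phi> z) w + herm n l z (\<phi> w) = 0}"

text \<open>(Lift of) T^{1,0}_Z S^l_{q,p}, the CR (complex) tangent space T \<inter> J T,
  where J is multiplication by i.\<close>
definition T10S :: "nat \<Rightarrow> nat \<Rightarrow> cvec set \<Rightarrow> (cvec \<Rightarrow> cvec) set" where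
  "T10S n l Z = {\<phi> \<in> TS n l Z. hsc \<i> \<phi> \<in> TS n l Z}"

text \<open>(Lift of) T^{1,0}_Z Gr(q,E) = Hom(Z, E/Z) inside Hom(Z, C^n/Z)\<close>
definition T10GrE :: "cvec set \<Rightarrow> cvec set \<Rightarrow> (cvec \<Rightarrow> cvec) set" where
  "T10GrE Z E = hom_into Z E"

definition CZ :: "nat \<Rightarrow> nat \<Rightarrow> cvec set \<Rightarrow> (cvec \<Rightarrow> cvec) set" where
  "CZ n l Z = (\<Union>E\<in>Lambda n l l Z. T10GrE Z E)"

end

theory Submission
  imports Defs
begin

interpretation vs: vector_space vsc
  by unfold_locales (auto simp: vsc_def fun_eq_iff algebra_simps)

interpretation hs: vector_space hsc
  by unfold_locales (auto simp: hsc_def vsc_def fun_eq_iff algebra_simps)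

lemma sum_fun_apply: "(sum f A) x = (\<Sum>a\<in>A. f a x)" for f :: "'a \<Rightarrow> 'b \<Rightarrow> 'c::comm_monoid_add"
  by (induction A rule: infinite_finite_induct) auto

lemma vsc_apply: "vsc c u i = c * u i" by (simp add: vsc_def)

definition ev :: "nat \<Rightarrow> cvec" where "ev i = (\<lambda>j. if j = i then 1 else 0)"
definition coord :: "nat set \<Rightarrow> cvec set" where "coord I = {v. \<forall>i. i \<notin> I \<longrightarrow> v i = 0}"

lemma ambient_coord: "ambient n = coord {..<n}"
  by (auto simp: ambient_def coord_def)

lemma coord_subspace: "vs.subspace (coord I)"
  apply (subst vs.subspace_def) unfolding coord_def
  by (intro conjI) (simp_all add: vsc_def)

lemma ambient_subspace: "vs.subspace (ambient n)"
  by (simp add: ambient_coord coord_subspace)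

lemma coord_mono: "I \<subseteq> J \<Longrightarrow> coord I \<subseteq> coord J"
  by (auto simp: coord_def)

lemma ev_inj: "inj ev"
  unfolding inj_def ev_def fun_eq_iff by (metis one_neq_zero)

lemma coord_span: assumes "finite I" shows "coord I = vs.span (ev ` I)"
proof
  show "vs.span (ev ` I) \<subseteq> coord I"
    by (rule vs.span_minimal) (auto simp: coord_def ev_def intro: coord_subspace[unfolded coord_def])
  show "coord I \<subseteq> vs.span (ev ` I)"
  proof
    fix v assume v: "v \<in> coord I"
    have "v = (\<Sum>i\<in>I. vsc (v i) (ev i))"
    proof
      fix j
      show "v j = (\<Sum>i\<in>I. vsc (v i) (ev i)) j"
      proof (cases "j \<in> I")
        case True
        then show ?thesis using assms
          by (simp add: vsc_apply sum_fun_apply ev_def if_distrib sum.delta cong: if_cong)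
      next
        case False
        then have "\<forall>a\<in>I. j \<noteq> a" by auto
        then show ?thesis using v False by (simp add: vsc_apply sum_fun_apply ev_def coord_def sum.neutral)
      qed
    qed
    also have "\<dots> \<in> vs.span (ev ` I)"
      by (intro vs.span_sum vs.span_scale vs.span_base) auto
    finally show "v \<in> vs.span (ev ` I)" .
  qed
qed

lemma ev_indep: "vs.independent (ev ` I)"
  unfolding vs.independent_explicit_finite_subsets
proof (intro allI impI ballI)
  fix S u v assume S: "S \<subseteq> ev ` I" "finite S" and eq: "(\<Sum>v\<in>S. vsc (u v) v) = 0" and v: "v \<in> S"
  then obtain j where j: "v = ev j" by auto
  have "0 = (\<Sum>w\<in>S. vsc (u w) w) j" using eq by simp
  also have "\<dots> = (\<Sum>w\<in>S. u w * w j)" by (simp add: vsc_apply sum_fun_apply)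
  also have "\<dots> = u v * v j"
  proof (rule sum.remove[OF S(2) v, THEN trans])
    have "\<forall>w\<in>S - {v}. w j = 0"
    proof
      fix w assume "w \<in> S - {v}"
      then obtain i where "w = ev i" "ev i \<noteq> ev j" using S j by auto
      then show "w j = 0" by (auto simp: ev_def)
    qed
    then show "u v * v j + (\<Sum>w\<in>S - {v}. u w * w j) = u v * v j" by (simp add: sum.neutral)
  qed
  finally show "u v = 0" using j by (simp add: ev_def)
qed

lemma card_ev: "card (ev ` I) = card I"
  using ev_inj by (simp add: card_image inj_on_subset)

lemma herm_add_left: "herm n l (u + v) w = herm n l u w + herm n l v w"
  by (simp add: herm_def algebra_simps sum.distrib)
lemma herm_add_right: "herm n l w (u + v) = herm n l w u + herm n l w v"
  by (simp add: herm_def algebra_simps sum.distrib)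
lemma herm_scale_left: "herm n l (vsc c u) w = c * herm n l u w"
  by (simp add: vsc_apply herm_def algebra_simps sum_distrib_left)
lemma herm_scale_right: "herm n l w (vsc c u) = cnj c * herm n l w u"
  by (simp add: vsc_apply herm_def algebra_simps sum_distrib_left)
lemma herm_zero_left[simp]: "herm n l 0 w = 0"
  by (simp add: herm_def)
lemma herm_zero_right[simp]: "herm n l w 0 = 0"
  by (simp add: herm_def)
lemma herm_cnj: "herm n l v u = cnj (herm n l u v)"
  unfolding herm_def by (simp add: algebra_simps) (rule sum.cong, auto)
lemma herm_diff_left: "herm n l (u - v) w = herm n l u w - herm n l v w"
  by (simp add: herm_def algebra_simps sum_subtractf)
lemma herm_diff_right: "herm n l w (u - v) = herm n l w u - herm n l w v"
  by (simp add: herm_def algebra_simps sum_subtractf)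

lemma herm_self: "herm n l u u = complex_of_real (\<Sum>i<n. (if i < l then -1 else 1) * (cmod (u i))^2)"
proof -
  have "\<And>i. (if i < l then -1 else 1) * u i * cnj (u i) = complex_of_real ((if i < l then -1 else 1) * (cmod (u i))^2)"
    by (simp add: complex_norm_square[symmetric] mult.assoc)
  then show ?thesis by (simp add: herm_def)
qed

lemma herm_self_real: "herm n l u u = complex_of_real (Re (herm n l u u))"
  by (simp add: herm_self)

lemma herm_kernel_right: "vs.subspace {v. herm n l x v = 0}"
  apply (subst vs.subspace_def)
  by (simp add: herm_add_right herm_scale_right)
lemma herm_kernel_left: "vs.subspace {v. herm n l v x = 0}"
  apply (subst vs.subspace_def)
  by (simp add: herm_add_left herm_scale_left)

lemma herm_span_right: "(\<And>v. v \<in> S \<Longrightarrow> herm n l x v = 0) \<Longrightarrow> y \<in> vs.span S \<Longrightarrow> herm n l x y = 0"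
  using vs.span_minimal[of S "{v. herm n l x v = 0}"] herm_kernel_right by blast
lemma herm_span_left: "(\<And>v. v \<in> S \<Longrightarrow> herm n l v x = 0) \<Longrightarrow> y \<in> vs.span S \<Longrightarrow> herm n l y x = 0"
  using vs.span_minimal[of S "{v. herm n l v x = 0}"] herm_kernel_left by blast

lemma iso_span: assumes "\<And>u v. u \<in> S \<Longrightarrow> v \<in> S \<Longrightarrow> herm n l u v = 0"
  shows "isotropic n l (vs.span S)"
  unfolding isotropic_def
proof (intro ballI)
  fix x y assume x: "x \<in> vs.span S" and y: "y \<in> vs.span S"
  have "\<And>u. u \<in> S \<Longrightarrow> herm n l u y = 0"
    using herm_span_right[OF assms y] by blast
  then show "herm n l x y = 0" using herm_span_left[OF _ x] by blast
qed

lemma herm_neg: assumes "a \<in> coord {..<l}" "a \<noteq> 0" "l \<le> n"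
  shows "Re (herm n l a a) < 0"
proof -
  obtain i0 where i0: "a i0 \<noteq> 0" using assms(2) by (auto simp: fun_eq_iff)
  then have il: "i0 < l" using assms(1) by (auto simp: coord_def)
  define f where "f i = (if i < l then -1 else 1) * (cmod (a i))^2" for i
  have f0: "f i \<le> 0" for i using assms(1) by (auto simp: f_def coord_def)
  have "Re (herm n l a a) = (\<Sum>i<n. f i)" by (simp add: herm_self f_def)
  also have "\<dots> = f i0 + (\<Sum>i\<in>{..<n} - {i0}. f i)"
    by (rule sum.remove) (use il assms(3) in auto)
  also have "\<dots> < 0"
  proof -
    have "f i0 < 0" using i0 il by (simp add: f_def)
    moreover have "(\<Sum>i\<in>{..<n} - {i0}. f i) \<le> 0" by (rule sum_nonpos) (simp add: f0)
    ultimately show ?thesis by simp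
  qed
  finally show ?thesis .
qed

lemma herm_pos: assumes "a \<in> coord {l..<n}" "a \<noteq> 0"
  shows "Re (herm n l a a) > 0"
proof -
  obtain i0 where i0: "a i0 \<noteq> 0" using assms(2) by (auto simp: fun_eq_iff)
  then have il: "l \<le> i0" "i0 < n" using assms(1) by (auto simp: coord_def)
  define f where "f i = (if i < l then -1 else 1) * (cmod (a i))^2" for i
  have f0: "f i \<ge> 0" for i using assms(1) by (auto simp: f_def coord_def)
  have "Re (herm n l a a) = (\<Sum>i<n. f i)" by (simp add: herm_self f_def)
  also have "\<dots> = f i0 + (\<Sum>i\<in>{..<n} - {i0}. f i)"
    by (rule sum.remove) (use il in auto)
  also have "\<dots> > 0"
  proof -
    have "f i0 > 0" using i0 il by (simp add: f_def)
    moreover have "(\<Sum>i\<in>{..<n} - {i0}. f i) \<ge> 0" by (rule sum_nonneg) (simp add: f0)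
    ultimately show ?thesis by simp
  qed
  finally show ?thesis .
qed

lemma herm_orth: assumes "a \<in> coord {..<l}" "b \<in> coord {l..<n}"
  shows "herm n l a b = 0"
  unfolding herm_def
  by (rule sum.neutral) (use assms in \<open>auto simp: coord_def\<close>)

lemma kernel_lemma:
  assumes I: "finite I" and B: "finite B" and card: "card B < card I" and F: "F \<subseteq> vs.span B"
  shows "\<exists>a\<in>coord I. a \<noteq> 0 \<and> (\<forall>f\<in>F. herm n l a f = 0)"
proof -
  define k where "k = card B"
  obtain h where h: "bij_betw h {0..<k} B" using ex_bij_betw_nat_finite[OF B] k_def by blast
  define g where "g a = (\<lambda>i. if i < k then herm n l a (h i) else 0)" for a
  have lin: "Vector_Spaces.linear vsc vsc g"
    unfolding Vector_Spaces.linear_iff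
    by (auto simp: vsc_apply vs.vector_space_axioms g_def fun_eq_iff herm_add_left herm_scale_left)
  then have mh: "module_hom vsc vsc g" by (simp add: module_hom_iff_linear)
  have "\<not> inj_on g (vs.span (ev ` I))"
  proof
    assume inj: "inj_on g (vs.span (ev ` I))"
    have ind: "vs.independent (g ` ev ` I)"
      by (rule module_hom.independent_injective_image[OF mh ev_indep inj])
    have "g ` ev ` I \<subseteq> coord {..<k}" by (auto simp: g_def coord_def)
    also have "\<dots> = vs.span (ev ` {..<k})" by (simp add: coord_span)
    finally have "finite (g ` ev ` I) \<and> card (g ` ev ` I) \<le> card (ev ` {..<k})"
      by (intro vs.independent_span_bound ind) auto
    moreover have "card (g ` ev ` I) = card I"
    proof -
      have "inj_on g (ev ` I)" using inj vs.span_superset by (rule inj_on_subset)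
      then show ?thesis by (simp add: card_image card_ev)
    qed
    ultimately show False using card k_def by (simp add: card_ev)
  qed
  then obtain a where a: "a \<in> vs.span (ev ` I)" "a \<noteq> 0" "g a = 0"
    using module_hom.inj_on_iff_eq_0[OF mh vs.subspace_span] by blast
  have "\<forall>b\<in>B. herm n l a b = 0"
  proof
    fix b assume "b \<in> B"
    then obtain i where i: "i < k" "b = h i" using h by (auto simp: bij_betw_def)
    then show "herm n l a b = 0" using fun_cong[OF a(3), of i] by (simp add: g_def)
  qed
  then have "\<forall>f\<in>F. herm n l a f = 0" using F herm_span_right[of B n l a] by blast
  then show ?thesis using a coord_span[OF I] by blast
qed

lemma sqrt_lemma: assumes "\<alpha> * \<beta> < (0::real)" shows "(sqrt (- \<alpha> / \<beta>))^2 * \<beta> = - \<alpha>"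
proof -
  have "\<beta> \<noteq> 0" using assms by auto
  have "- \<alpha> / \<beta> \<ge> 0" using assms
    by (metis divide_eq_0_iff le_less linorder_not_le minus_divide_left neg_0_less_iff_less zero_less_divide_iff zero_less_mult_iff)
  then show ?thesis using \<open>\<beta> \<noteq> 0\<close> by simp
qed

lemma comb:
  assumes "herm n l a b = 0" "herm n l a a = of_real \<alpha>" "herm n l b b = of_real \<beta>" "s^2 * \<beta> = - \<alpha>"
  shows "herm n l (a + vsc (of_real s) b) (a + vsc (of_real s) b) = 0"
proof -
  have ba: "herm n l b a = 0" using assms(1) herm_cnj[of n l b a] by simp
  have "herm n l (a + vsc (of_real s) b) (a + vsc (of_real s) b) = of_real \<alpha> + of_real (s^2 * \<beta>)"
    using assms(1-3) ba by (simp add: herm_add_left herm_add_right herm_scale_left herm_scale_right power2_eq_square)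
  then show ?thesis using assms(4) by simp
qed

lemma iso_insert:
  assumes "herm n l x x = 0" "\<And>f. f \<in> vs.span B \<Longrightarrow> herm n l x f = 0" "isotropic n l (vs.span B)"
  shows "isotropic n l (vs.span (insert x B))"
proof (rule iso_span)
  fix u v assume uv: "u \<in> insert x B" "v \<in> insert x B"
  have xf: "herm n l f x = 0" if "f \<in> vs.span B" for f
    using assms(2)[OF that] herm_cnj[of n l f x] by simp
  show "herm n l u v = 0"
    using uv assms(1,3) assms(2)[OF vs.span_base] xf[OF vs.span_base] vs.span_base
    unfolding isotropic_def by auto
qed

lemma ext_lemma:
  assumes lnn: "l + l \<le> n" and B: "finite B" "B \<subseteq> ambient n" and iso: "isotropic n l (vs.span B)"
    and cB: "card B < l"
  shows "\<exists>x\<in>ambient n. x \<notin> vs.span B \<and> isotropic n l (vs.span (insert x B))"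
proof -
  obtain a where a: "a \<in> coord {..<l}" "a \<noteq> 0" "\<forall>f\<in>vs.span B. herm n l a f = 0"
    using kernel_lemma[of "{..<l}" B "vs.span B" n l] B cB by auto
  obtain b where b: "b \<in> coord {l..<n}" "b \<noteq> 0" "\<forall>f\<in>vs.span B. herm n l b f = 0"
  proof -
    have "card B < card {l..<n}" using cB lnn by simp
    then show ?thesis using that kernel_lemma[of "{l..<n}" B "vs.span B" n l] B by auto
  qed
  define \<alpha> where "\<alpha> = Re (herm n l a a)"
  define \<beta> where "\<beta> = Re (herm n l b b)"
  have al: "\<alpha> < 0" using herm_neg[OF a(1,2)] lnn by (simp add: \<alpha>_def)
  have be: "\<beta> > 0" using herm_pos[OF b(1,2)] by (simp add: \<beta>_def)
  have ab: "herm n l a b = 0" by (rule herm_orth[OF a(1) b(1)])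
  define s where "s = sqrt (- \<alpha> / \<beta>)"
  have s2: "s^2 * \<beta> = - \<alpha>" "(-s)^2 * \<beta> = - \<alpha>"
    using sqrt_lemma[of \<alpha> \<beta>] al be by (simp_all add: s_def mult_neg_pos)
  define x1 where "x1 = a + vsc (of_real s) b"
  define x2 where "x2 = a + vsc (of_real (-s)) b"
  have iso1: "herm n l x1 x1 = 0" unfolding x1_def
    by (rule comb[OF ab _ _ s2(1)]) (simp_all add: \<alpha>_def \<beta>_def herm_self_real[symmetric])
  have iso2: "herm n l x2 x2 = 0" unfolding x2_def
    by (rule comb[OF ab _ _ s2(2)]) (simp_all add: \<alpha>_def \<beta>_def herm_self_real[symmetric])
  have o1: "herm n l x1 f = 0" if "f \<in> vs.span B" for f
    using a(3) b(3) that by (simp add: x1_def herm_add_left herm_scale_left)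
  have o2: "herm n l x2 f = 0" if "f \<in> vs.span B" for f
    using a(3) b(3) that by (simp add: x2_def herm_add_left herm_scale_left herm_diff_left)
  have aamb: "a \<in> ambient n" using a(1) lnn coord_mono[of "{..<l}" "{..<n}"] by (auto simp: ambient_coord)
  have bamb: "b \<in> ambient n" using b(1) coord_mono[of "{l..<n}" "{..<n}"] by (auto simp: ambient_coord subset_iff)
  have amb1: "x1 \<in> ambient n" unfolding x1_def
    by (intro vs.subspace_add[OF ambient_subspace] vs.subspace_scale[OF ambient_subspace] aamb bamb)
  have amb2: "x2 \<in> ambient n" unfolding x2_def
    by (intro vs.subspace_add[OF ambient_subspace] vs.subspace_scale[OF ambient_subspace] aamb bamb)
  have "\<not> (x1 \<in> vs.span B \<and> x2 \<in> vs.span B)"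
  proof
    assume both: "x1 \<in> vs.span B \<and> x2 \<in> vs.span B"
    have "a = vsc (1/2) (x1 + x2)" by (simp add: vsc_apply x1_def x2_def fun_eq_iff algebra_simps)
    then have "a \<in> vs.span B" using both by (simp add: vs.span_add vs.span_scale)
    then have "herm n l a a = 0" using iso by (simp add: isotropic_def)
    then show False using al by (simp add: \<alpha>_def)
  qed
  then show ?thesis
    using iso_insert[OF iso1 o1 iso] iso_insert[OF iso2 o2 iso] amb1 amb2 by blast
qed

lemma ext_full:
  assumes lnn: "l + l \<le> n"
  shows "finite B \<Longrightarrow> vs.independent B \<Longrightarrow> B \<subseteq> ambient n \<Longrightarrow> isotropic n l (vs.span B)
    \<Longrightarrow> card B + j = l \<Longrightarrow> \<exists>B'. B \<subseteq> B' \<and> finite B' \<and> vs.independent B' \<and> B' \<subseteq> ambient n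
        \<and> isotropic n l (vs.span B') \<and> card B' = l"
proof (induction j arbitrary: B)
  case 0
  then show ?case by auto
next
  case (Suc j)
  then have "card B < l" by simp
  then obtain x where x: "x \<in> ambient n" "x \<notin> vs.span B" "isotropic n l (vs.span (insert x B))"
    using ext_lemma[OF lnn Suc.prems(1) Suc.prems(3,4)] by blast
  have xB: "x \<notin> B" using x(2) vs.span_base by blast
  have "\<exists>B'. insert x B \<subseteq> B' \<and> finite B' \<and> vs.independent B' \<and> B' \<subseteq> ambient n
        \<and> isotropic n l (vs.span B') \<and> card B' = l"
    apply (rule Suc.IH)
    using Suc.prems x xB vs.independent_insertI by auto
  then show ?case by blast
qed

lemma basis_Z:
  assumes "csubspace n Z"
  obtains BZ where "finite BZ" "vs.independent BZ" "vs.span BZ = Z" "card BZ = cdim Z" "BZ \<subseteq> Z"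
proof -
  obtain BZ where B: "BZ \<subseteq> Z" "vs.independent BZ" "Z \<subseteq> vs.span BZ" "card BZ = vs.dim Z"
    using vs.basis_exists by blast
  have sub: "vs.subspace Z" "Z \<subseteq> ambient n" using assms by (auto simp: csubspace_def)
  have "vs.span BZ \<subseteq> Z" using vs.span_minimal[OF B(1) sub(1)] .
  then have "vs.span BZ = Z" using B(3) by blast
  moreover have "finite BZ"
  proof -
    have "BZ \<subseteq> vs.span (ev ` {..<n})" using B(1) sub(2) by (simp add: ambient_coord coord_span)
    then show ?thesis using vs.independent_span_bound[OF _ B(2)] by blast
  qed
  ultimately show ?thesis using that B by (simp add: cdim_def)
qed

lemma lambda_exists:
  assumes lnn: "l + l \<le> n" and Z: "csubspace n Z" "isotropic n l Z" "cdim Z < l"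
    and x: "x \<in> ambient n" "herm n l x x = 0" "\<forall>z\<in>Z. herm n l x z = 0"
  shows "\<exists>E\<in>Lambda n l l Z. x \<in> E"
proof -
  obtain BZ where BZ: "finite BZ" "vs.independent BZ" "vs.span BZ = Z" "card BZ = cdim Z" "BZ \<subseteq> Z"
    using basis_Z[OF Z(1)] by blast
  have Zamb: "Z \<subseteq> ambient n" using Z(1) by (simp add: csubspace_def)
  define B0 where "B0 = (if x \<in> Z then BZ else insert x BZ)"
  have B0: "finite B0" "vs.independent B0" "B0 \<subseteq> ambient n" "isotropic n l (vs.span B0)"
    "card B0 \<le> l" "x \<in> vs.span B0" "Z \<subseteq> vs.span B0"
  proof -
    show "finite B0" using BZ by (simp add: B0_def)
    show "vs.independent B0" using BZ vs.independent_insertI[of x BZ] by (auto simp: B0_def)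
    show "B0 \<subseteq> ambient n" using BZ Zamb x by (auto simp: B0_def)
    show "isotropic n l (vs.span B0)"
      using Z(2) BZ(3) iso_insert[of n l x BZ] x by (auto simp: B0_def)
    show "card B0 \<le> l" using BZ Z(3) card_insert_le_m1 by (auto simp: B0_def card_insert_if)
    show "x \<in> vs.span B0" using BZ(3) by (auto simp: B0_def intro: vs.span_base)
    show "Z \<subseteq> vs.span B0" using BZ(3) vs.span_mono[of BZ "insert x BZ"] by (auto simp: B0_def)
  qed
  obtain B' where B': "B0 \<subseteq> B'" "finite B'" "vs.independent B'" "B' \<subseteq> ambient n"
    "isotropic n l (vs.span B')" "card B' = l"
    using ext_full[OF lnn B0(1-4), of "l - card B0"] B0(5) by auto
  define E where "E = vs.span B'"
  have "E \<in> Lambda n l l Z"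
  proof -
    have "csubspace n E"
      using vs.span_minimal[OF B'(4) ambient_subspace] by (simp add: csubspace_def E_def vs.subspace_span)
    moreover have "cdim E = l" using B' by (simp add: cdim_def E_def vs.dim_eq_card_independent)
    moreover have "Z \<subseteq> E" using B0(7) vs.span_mono[OF B'(1)] by (auto simp: E_def)
    ultimately show ?thesis using B'(5) by (simp add: Lambda_def Nset_def E_def)
  qed
  moreover have "x \<in> E" using B0(6) vs.span_mono[OF B'(1)] by (auto simp: E_def)
  ultimately show ?thesis by blast
qed

definition zperp :: "nat \<Rightarrow> nat \<Rightarrow> cvec set \<Rightarrow> cvec set" where
  "zperp n l Z = {v \<in> ambient n. \<forall>z\<in>Z. herm n l v z = 0}"

lemma zperp_subspace: "vs.subspace (zperp n l Z)"
  apply (subst vs.subspace_def)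
  using ambient_subspace[of n]
  by (auto simp: zperp_def herm_add_left herm_scale_left vs.subspace_0 vs.subspace_add vs.subspace_scale)

lemma zperp_span:
  assumes lnn: "l + l \<le> n" and Z: "csubspace n Z" "isotropic n l Z" "cdim Z < l"
    and w: "w \<in> zperp n l Z"
  shows "w \<in> vs.span (\<Union>(Lambda n l l Z))"
proof -
  let ?U = "\<Union>(Lambda n l l Z)"
  have isoU: "v \<in> ?U" if "v \<in> zperp n l Z" "herm n l v v = 0" for v
    using lambda_exists[OF lnn Z, of v] that by (auto simp: zperp_def)
  show ?thesis
  proof (cases "herm n l w w = 0")
    case True
    then show ?thesis using isoU[OF w] vs.span_base by blast
  next
    case False
    define \<beta> where "\<beta> = Re (herm n l w w)"
    have hww: "herm n l w w = of_real \<beta>" using herm_self_real by (simp add: \<beta>_def)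
    have b0: "\<beta> \<noteq> 0" using False hww by auto
    obtain BZ where BZ: "finite BZ" "vs.independent BZ" "vs.span BZ = Z" "card BZ = cdim Z" "BZ \<subseteq> Z"
      using basis_Z[OF Z(1)] by blast
    obtain v0 where v0: "v0 \<in> zperp n l Z" "Re (herm n l v0 v0) * \<beta> < 0"
    proof (cases "\<beta> > 0")
      case True
      obtain a where a: "a \<in> coord {..<l}" "a \<noteq> 0" "\<forall>f\<in>Z. herm n l a f = 0"
        using kernel_lemma[of "{..<l}" BZ Z n l] BZ Z(3) by auto
      have "a \<in> ambient n" using a(1) lnn coord_mono[of "{..<l}" "{..<n}"] by (auto simp: ambient_coord)
      then have "a \<in> zperp n l Z" using a by (simp add: zperp_def)
      moreover have "Re (herm n l a a) < 0" using herm_neg[OF a(1,2)] lnn by simp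
      ultimately show ?thesis using that True mult_neg_pos by blast
    next
      case False
      then have bn: "\<beta> < 0" using b0 by simp
      have "card BZ < card {l..<n}" using BZ Z(3) lnn by simp
      then obtain a where a: "a \<in> coord {l..<n}" "a \<noteq> 0" "\<forall>f\<in>Z. herm n l a f = 0"
        using kernel_lemma[of "{l..<n}" BZ Z n l] BZ by auto
      have "a \<in> ambient n" using a(1) coord_mono[of "{l..<n}" "{..<n}"] by (auto simp: ambient_coord subset_iff)
      then have "a \<in> zperp n l Z" using a by (simp add: zperp_def)
      moreover have "Re (herm n l a a) > 0" using herm_pos[OF a(1,2)] by simp
      ultimately show ?thesis using that bn mult_pos_neg by blast
    qed
    define d where "d = herm n l v0 w"
    define c where "c = d / of_real \<beta>"
    define a where "a = v0 - vsc c w"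
    have az: "a \<in> zperp n l Z" unfolding a_def
      using zperp_subspace w v0(1) by (simp add: vs.subspace_diff vs.subspace_scale)
    have aw: "herm n l a w = 0"
      using b0 by (simp add: a_def herm_diff_left herm_scale_left hww c_def d_def)
    have wa: "herm n l w a = 0" using aw herm_cnj[of n l w a] by simp
    have wv0: "herm n l w v0 = cnj d" using herm_cnj[of n l w v0] by (simp add: d_def)
    have "herm n l a a = herm n l a v0"
      using aw by (simp add: a_def[of] herm_diff_right herm_scale_right)
    also have "\<dots> = herm n l v0 v0 - c * cnj d"
      by (simp add: a_def herm_diff_left herm_scale_left wv0)
    also have "c * cnj d = of_real ((cmod d)^2 / \<beta>)"
      using complex_norm_square[of d] by (simp add: c_def)
    finally have haa: "Re (herm n l a a) = Re (herm n l v0 v0) - (cmod d)^2 / \<beta>" by simp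
    have neg: "\<beta> * Re (herm n l a a) < 0"
    proof -
      have "\<beta> * Re (herm n l a a) = Re (herm n l v0 v0) * \<beta> - (cmod d)^2"
        using b0 by (simp add: haa algebra_simps)
      then show ?thesis using v0(2) by (smt (verit) zero_le_power2)
    qed
    define t where "t = sqrt (- \<beta> / Re (herm n l a a))"
    have t2: "t^2 * Re (herm n l a a) = - \<beta>" "(-t)^2 * Re (herm n l a a) = - \<beta>"
      using sqrt_lemma[OF neg] by (simp_all add: t_def)
    define x1 where "x1 = w + vsc (of_real t) a"
    define x2 where "x2 = w + vsc (of_real (-t)) a"
    have "herm n l x1 x1 = 0" unfolding x1_def
      by (rule comb[OF wa hww _ t2(1)]) (simp add: herm_self_real[symmetric])
    moreover have "herm n l x2 x2 = 0" unfolding x2_def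
      by (rule comb[OF wa hww _ t2(2)]) (simp add: herm_self_real[symmetric])
    moreover have "x1 \<in> zperp n l Z" "x2 \<in> zperp n l Z" unfolding x1_def x2_def
      using zperp_subspace w az by (simp_all add: vs.subspace_add vs.subspace_scale vs.subspace_diff)
    ultimately have "x1 \<in> ?U" "x2 \<in> ?U" using isoU by auto
    moreover have "w = vsc (1/2) (x1 + x2)" by (simp add: vsc_apply x1_def x2_def fun_eq_iff algebra_simps)
    ultimately show ?thesis by (metis vs.span_add vs.span_base vs.span_scale)
  qed
qed

lemma T10S_char:
  assumes "\<phi> \<in> T10S n l Z" "z \<in> Z"
  shows "\<phi> z \<in> zperp n l Z"
proof -
  have hom: "\<phi> \<in> hom_into Z (ambient n)" using assms(1) by (simp add: T10S_def TS_def)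
  have "herm n l (\<phi> z) w = 0" if w: "w \<in> Z" for w
  proof -
    have e1: "herm n l (\<phi> z) w + herm n l z (\<phi> w) = 0"
      using assms w by (auto simp: T10S_def TS_def)
    have "herm n l (hsc \<i> \<phi> z) w + herm n l z (hsc \<i> \<phi> w) = 0"
      using assms w by (auto simp: T10S_def TS_def)
    then have e2: "\<i> * herm n l (\<phi> z) w - \<i> * herm n l z (\<phi> w) = 0"
      by (simp add: hsc_def herm_scale_left herm_scale_right)
    then have "\<i> * (herm n l (\<phi> z) w - herm n l z (\<phi> w)) = 0"
      by (simp add: right_diff_distrib)
    then have "herm n l (\<phi> z) w = herm n l z (\<phi> w)" by simp
    with e1 show ?thesis by simp
  qed
  moreover have "\<phi> z \<in> ambient n" using hom assms(2) by (simp add: hom_into_def)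
  ultimately show ?thesis by (simp add: zperp_def)
qed

lemma hom_sum:
  assumes "\<phi> \<in> hom_into Z Y" "vs.subspace Z" "finite A" "A \<subseteq> Z"
  shows "\<phi> (\<Sum>a\<in>A. vsc (f a) a) = (\<Sum>a\<in>A. vsc (f a) (\<phi> a))"
  using assms(3,4)
proof (induction A rule: finite_induct)
  case empty
  have z0: "0 \<in> Z" using vs.subspace_0[OF assms(2)] .
  have "\<phi> (vsc 0 0) = vsc 0 (\<phi> 0)" using assms(1) z0 unfolding hom_into_def by blast
  then have "\<phi> 0 = 0" by (simp add: vs.scale_zero_left vs.scale_zero_right)
  then show ?case by (simp only: sum.empty)
next
  case (insert a A)
  have sZ: "(\<Sum>a\<in>A. vsc (f a) a) \<in> Z" using insert assms(2)
    by (intro vs.subspace_sum) (auto intro: vs.subspace_scale)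
  have aZ: "vsc (f a) a \<in> Z" using insert assms(2) vs.subspace_scale by auto
  have "\<phi> (\<Sum>a\<in>insert a A. vsc (f a) a) = \<phi> (vsc (f a) a + (\<Sum>a\<in>A. vsc (f a) a))"
    using insert by simp
  also have "\<dots> = \<phi> (vsc (f a) a) + \<phi> (\<Sum>a\<in>A. vsc (f a) a)"
    using assms(1) sZ aZ by (simp add: hom_into_def)
  also have "\<dots> = vsc (f a) (\<phi> a) + (\<Sum>a\<in>A. vsc (f a) (\<phi> a))"
    using assms(1) insert by (simp add: hom_into_def)
  finally show ?case by (simp only: sum.insert[OF insert(1,2)])
qed

lemma main_decomp:
  assumes lnn: "l + l \<le> n" and Z: "csubspace n Z" "isotropic n l Z" "cdim Z < l"
    and W: "hs.subspace W" "CZ n l Z \<subseteq> W" and phi: "\<phi> \<in> T10S n l Z"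
  shows "\<phi> \<in> W"
proof -
  obtain BZ where BZ: "finite BZ" "vs.independent BZ" "vs.span BZ = Z" "card BZ = cdim Z" "BZ \<subseteq> Z"
    using basis_Z[OF Z(1)] by blast
  have Zs: "vs.subspace Z" using Z(1) by (simp add: csubspace_def)
  let ?R = "vs.representation BZ"
  define \<psi> where "\<psi> b x = (\<lambda>v. if v \<in> Z then vsc (?R v b) x else 0)" for b x
  have radd: "?R (u + v) b = ?R u b + ?R v b" if "u \<in> Z" "v \<in> Z" for u v b
    using vs.representation_add[OF BZ(2), of v u] that BZ(3) by simp
  have rsc: "?R (vsc c u) b = c * ?R u b" if "u \<in> Z" for u c b
    using vs.representation_scale[OF BZ(2), of u c] that BZ(3) by simp
  have psiE: "\<psi> b x \<in> W" if x: "x \<in> E" "E \<in> Lambda n l l Z" for b x E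
  proof -
    have Es: "vs.subspace E" using x(2) by (simp add: Lambda_def Nset_def csubspace_def)
    have "\<psi> b x \<in> hom_into Z E"
      unfolding hom_into_def mem_Collect_eq
    proof (intro conjI ballI allI impI)
      fix u v assume uv: "u \<in> Z" "v \<in> Z"
      then have "u + v \<in> Z" using Zs vs.subspace_add by blast
      then show "\<psi> b x (u + v) = \<psi> b x u + \<psi> b x v"
        using uv by (simp add: \<psi>_def radd vs.scale_left_distrib)
    next
      fix c u assume u: "u \<in> Z"
      then have "vsc c u \<in> Z" using Zs vs.subspace_scale by blast
      then show "\<psi> b x (vsc c u) = vsc c (\<psi> b x u)"
        using u by (simp add: \<psi>_def rsc vs.scale_scale)
    next
      fix u assume u: "u \<in> Z"
      then show "\<psi> b x u \<in> E" using x(1) Es by (simp add: \<psi>_def vs.subspace_scale)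
    next
      fix u assume u: "u \<notin> Z"
      then show "\<psi> b x u = 0" by (simp add: \<psi>_def)
    qed
    then have "\<psi> b x \<in> CZ n l Z" using x(2) by (auto simp: CZ_def T10GrE_def)
    then show ?thesis using W(2) by blast
  qed
  have Sb: "vs.subspace {x. \<psi> b x \<in> W}" for b
  proof -
    have p0: "\<psi> b 0 = 0" by (simp add: \<psi>_def fun_eq_iff vsc_def)
    have padd: "\<psi> b (x + y) = \<psi> b x + \<psi> b y" for x y
      by (simp add: \<psi>_def fun_eq_iff vsc_def algebra_simps)
    have psc: "\<psi> b (vsc c x) = hsc c (\<psi> b x)" for c x
      by (simp add: \<psi>_def fun_eq_iff vsc_def hsc_def algebra_simps)
    show ?thesis
      apply (subst vs.subspace_def)
      using W(1) p0 padd psc by (simp add: hs.subspace_0 hs.subspace_add hs.subspace_scale)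
  qed
  have Uin: "vs.span (\<Union>(Lambda n l l Z)) \<subseteq> {x. \<psi> b x \<in> W}" for b
    by (rule vs.span_minimal[OF _ Sb]) (use psiE in blast)
  have each: "\<psi> b (\<phi> b) \<in> W" if "b \<in> BZ" for b
  proof -
    have "\<phi> b \<in> zperp n l Z" using T10S_char[OF phi] that BZ(5) by blast
    then have "\<phi> b \<in> vs.span (\<Union>(Lambda n l l Z))" using zperp_span[OF lnn Z] by blast
    then show ?thesis using Uin by blast
  qed
  have hom: "\<phi> \<in> hom_into Z (ambient n)" using phi by (simp add: T10S_def TS_def)
  have eq: "\<phi> = (\<Sum>b\<in>BZ. \<psi> b (\<phi> b))"
  proof
    fix v
    show "\<phi> v = (\<Sum>b\<in>BZ. \<psi> b (\<phi> b)) v"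
    proof (cases "v \<in> Z")
      case True
      have "\<phi> v = \<phi> (\<Sum>b\<in>BZ. vsc (?R v b) b)"
        using vs.sum_representation_eq[OF BZ(2), of v BZ] True BZ by simp
      also have "\<dots> = (\<Sum>b\<in>BZ. vsc (?R v b) (\<phi> b))"
        by (rule hom_sum[OF hom Zs BZ(1) BZ(5)])
      finally show ?thesis using True by (simp add: sum_fun_apply \<psi>_def)
    next
      case False
      then show ?thesis using hom by (simp add: sum_fun_apply \<psi>_def hom_into_def)
    qed
  qed
  have "(\<Sum>b\<in>BZ. \<psi> b (\<phi> b)) \<in> W" by (rule hs.subspace_sum[OF W(1)]) (use each in blast)
  then show ?thesis by (simp only: eq[symmetric])
qed

theorem lemma3p1:
  fixes p q l :: nat and Z :: "cvec set"
  assumes "0 < q" and "q < p" and "q \<le> l" and "2 * l \<le> p + q"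
    and "q < l"
    and "Z \<in> Sgr l q p"
  shows "\<not> (\<exists>W. module.subspace hsc W \<and> hom_into Z Z \<subseteq> W
              \<and> W \<subseteq> T10S (p+q) l Z \<and> W \<noteq> T10S (p+q) l Z
              \<and> CZ (p+q) l Z \<subseteq> W)"
proof
  assume "\<exists>W. module.subspace hsc W \<and> hom_into Z Z \<subseteq> W
              \<and> W \<subseteq> T10S (p+q) l Z \<and> W \<noteq> T10S (p+q) l Z
              \<and> CZ (p+q) l Z \<subseteq> W"
  then obtain W where W: "hs.subspace W" "W \<subseteq> T10S (p+q) l Z" "W \<noteq> T10S (p+q) l Z"
    "CZ (p+q) l Z \<subseteq> W" by blast
  have Z: "csubspace (p+q) Z" "isotropic (p+q) l Z" "cdim Z < l"
    using assms(5,6) by (auto simp: Sgr_def Gr_def)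
  have lnn: "l + l \<le> p + q" using assms(4) by simp
  have "T10S (p+q) l Z \<subseteq> W"
    using main_decomp[OF lnn Z W(1) W(4)] by blast
  then show False using W(2,3) by blast
qed

end
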